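(* Let $n\ge1$, $N\ge3$, $m=n+N$, let $u>0$ solve $\partial_tu=\Delta_xu$ on $\mathbb{R}^n\times(0,\infty)$ with $u=t^{-n/2}e^{-f}$, fix $0<\tau_1<\tau_2$, and assume $f$ and all of its partial derivatives in $x$ and $t$ are bounded on $\mathbb{R}^n\times[\tau_1,\tau_2]$. With $v,b,\psi$ as in the context, there is a constant $C$ depending only on $n$, $f$ and $\tau_2$ such that at every $(x,y)$ with $\frac{|y|^2}{2N}\in[\tau_1,\tau_2]$, \[ |\psi|,\ |\nabla_x\psi|,\ |\nabla_y b|\le C\qquad\text{and}\qquad |\nabla_y\psi|,\ |\nabla_x b|\le C\,N^{-1/2}. \]
   Context: $\mathbb{R}^m=\mathbb{R}^n\times\mathbb{R}^N$, points $(x,y)$, $r=|y|$; $\nabla_x,\nabla_y$ are the gradients in the $x$ and $y$ variables and $\Delta$ is the Euclidean Laplacian on $\mathbb{R}^m$. $v(x,y)=r^{2-m}\exp(-f(x,\tfrac{r^2}{2N}))$, $b=v^{1/(2-m)}$, $\psi=b^m\Delta v$. *)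

theory Defs
  imports "HOL-Analysis.Analysis"
begin

text \<open>Functions of (x,t) with x in R^n (index type 'n) and t real.
  A direction is either None (the t-variable) or Some j (the coordinate x_j).\<close>

definition dline :: "'n option \<Rightarrow> (real^'n \<Rightarrow> real \<Rightarrow> real) \<Rightarrow> real^'n \<Rightarrow> real \<Rightarrow> real \<Rightarrow> real" where
  "dline d g x t = (case d of
      None \<Rightarrow> (\<lambda>s. g x s)
    | Some j \<Rightarrow> (\<lambda>s. g (\<chi> k. if k = j then s else x $ k) t))"

definition dbase :: "'n option \<Rightarrow> real^'n \<Rightarrow> real \<Rightarrow> real" where
  "dbase d x t = (case d of None \<Rightarrow> t | Some j \<Rightarrow> x $ j)"

definition pd :: "'n option \<Rightarrow> (real^'n \<Rightarrow> real \<Rightarrow> real) \<Rightarrow> real^'n \<Rightarrow> real \<Rightarrow> real" where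
  "pd d g x t = deriv (dline d g x t) (dbase d x t)"

definition pds :: "'n option list \<Rightarrow> (real^'n \<Rightarrow> real \<Rightarrow> real) \<Rightarrow> real^'n \<Rightarrow> real \<Rightarrow> real" where
  "pds ds g = foldr pd ds g"

text \<open>Functions of (x,y) on R^m = R^n x R^N; y is represented as nat => real,
  only the coordinates y 0, ..., y (N-1) are used.\<close>

definition sqnorm :: "nat \<Rightarrow> (nat \<Rightarrow> real) \<Rightarrow> real" where
  "sqnorm N y = (\<Sum>i<N. (y i)\<^sup>2)"

definition pdx :: "'n \<Rightarrow> (real^'n \<Rightarrow> (nat \<Rightarrow> real) \<Rightarrow> real) \<Rightarrow> real^'n \<Rightarrow> (nat \<Rightarrow> real) \<Rightarrow> real" where
  "pdx j G x y = deriv (\<lambda>s. G (\<chi> k. if k = j then s else x $ k) y) (x $ j)"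

definition pdy :: "nat \<Rightarrow> (real^'n \<Rightarrow> (nat \<Rightarrow> real) \<Rightarrow> real) \<Rightarrow> real^'n \<Rightarrow> (nat \<Rightarrow> real) \<Rightarrow> real" where
  "pdy i G x y = deriv (\<lambda>s. G x (y(i := s))) (y i)"

definition gradx_norm :: "(real^'n \<Rightarrow> (nat \<Rightarrow> real) \<Rightarrow> real) \<Rightarrow> real^'n \<Rightarrow> (nat \<Rightarrow> real) \<Rightarrow> real" where
  "gradx_norm G x y = sqrt (\<Sum>j\<in>UNIV. (pdx j G x y)\<^sup>2)"

definition grady_norm :: "nat \<Rightarrow> (real^'n \<Rightarrow> (nat \<Rightarrow> real) \<Rightarrow> real) \<Rightarrow> real^'n \<Rightarrow> (nat \<Rightarrow> real) \<Rightarrow> real" where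
  "grady_norm N G x y = sqrt (\<Sum>i<N. (pdy i G x y)\<^sup>2)"

definition laplacian :: "nat \<Rightarrow> (real^'n \<Rightarrow> (nat \<Rightarrow> real) \<Rightarrow> real) \<Rightarrow> real^'n \<Rightarrow> (nat \<Rightarrow> real) \<Rightarrow> real" where
  "laplacian N G x y = (\<Sum>j\<in>UNIV. pdx j (pdx j G) x y) + (\<Sum>i<N. pdy i (pdy i G) x y)"

definition vfun :: "nat \<Rightarrow> (real^'n \<Rightarrow> real \<Rightarrow> real) \<Rightarrow> real^'n \<Rightarrow> (nat \<Rightarrow> real) \<Rightarrow> real" where
  "vfun N f x y = sqrt (sqnorm N y) powr (2 - real (CARD('n) + N))
      * exp (- f x (sqnorm N y / (2 * real N)))"

definition bfun :: "nat \<Rightarrow> (real^'n \<Rightarrow> real \<Rightarrow> real) \<Rightarrow> real^'n \<Rightarrow> (nat \<Rightarrow> real) \<Rightarrow> real" where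
  "bfun N f x y = vfun N f x y powr (1 / (2 - real (CARD('n) + N)))"

definition psifun :: "nat \<Rightarrow> (real^'n \<Rightarrow> real \<Rightarrow> real) \<Rightarrow> real^'n \<Rightarrow> (nat \<Rightarrow> real) \<Rightarrow> real" where
  "psifun N f x y = bfun N f x y ^ (CARD('n) + N) * laplacian N (vfun N f) x y"

end

theory Submission
  imports Defs
begin

abbreviation upd :: "real^'n \<Rightarrow> 'n \<Rightarrow> real \<Rightarrow> real^'n" where
  "upd x j \<sigma> \<equiv> (\<chi> k. if k = j then \<sigma> else x $ k)"

lemma upd_same[simp]: "upd x j (x $ j) = x"
  by (simp add: vec_eq_iff)

lemma pds_Nil[simp]: "pds [] f = f" by (simp add: pds_def)
lemma pds_Cons: "pds (d#ds) f = pd d (pds ds f)" by (simp add: pds_def)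

lemma D_t:
  assumes fs: "\<forall>ds d x t. 0 < t \<longrightarrow> dline d (pds ds f) x t differentiable (at (dbase d x t))"
    and t: "0 < t"
  shows "((\<lambda>s. pds ds f x s) has_real_derivative pds (None#ds) f x t) (at t)"
proof -
  have "(\<lambda>s. pds ds f x s) differentiable (at t)"
  proof -
    have "dline None (pds ds f) x t differentiable (at (dbase None x t))" using fs t by blast
    then show ?thesis by (simp add: dline_def dbase_def)
  qed
  then show ?thesis
    by (simp add: DERIV_deriv_iff_real_differentiable[symmetric] pds_Cons pd_def dline_def dbase_def)
qed

lemma D_x:
  assumes fs: "\<forall>ds d x t. 0 < t \<longrightarrow> dline d (pds ds f) x t differentiable (at (dbase d x t))"
    and t: "0 < t"
  shows "((\<lambda>\<sigma>. pds ds f (upd x j \<sigma>) t) has_real_derivative pds (Some j#ds) f x t) (at (x$j))"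
proof -
  have "(\<lambda>\<sigma>. pds ds f (upd x j \<sigma>) t) differentiable (at (x$j))"
  proof -
    have "dline (Some j) (pds ds f) x t differentiable (at (dbase (Some j) x t))" using fs t by blast
    then show ?thesis by (simp add: dline_def dbase_def)
  qed
  then show ?thesis
    by (simp add: DERIV_deriv_iff_real_differentiable[symmetric] pds_Cons pd_def dline_def dbase_def)
qed

lemma D_t0:
  assumes fs: "\<forall>ds d x t. 0 < t \<longrightarrow> dline d (pds ds f) x t differentiable (at (dbase d x t))"
    and t: "0 < t"
  shows "((\<lambda>s. f x s) has_real_derivative pds [None] f x t) (at t)"
  using D_t[OF fs t, of "[]"] by simp

lemma D_x0:
  assumes fs: "\<forall>ds d x t. 0 < t \<longrightarrow> dline d (pds ds f) x t differentiable (at (dbase d x t))"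
    and t: "0 < t"
  shows "((\<lambda>\<sigma>. f (upd x j \<sigma>) t) has_real_derivative pds [Some j] f x t) (at (x$j))"
  using D_x[OF fs t, of "[]"] by simp

lemma sqnorm_nonneg: "0 \<le> sqnorm N y"
  unfolding sqnorm_def by (simp add: sum_nonneg)

lemma sqnorm_upd: "i < N \<Longrightarrow> sqnorm N (y(i:=\<sigma>)) = sqnorm N y - (y i)^2 + \<sigma>^2"
proof -
  assume i: "i < N"
  have "(\<Sum>k<N. ((y(i:=\<sigma>)) k)^2) = (\<Sum>k<N. (y k)^2 + (if k = i then \<sigma>^2 - (y i)^2 else 0))"
    by (rule sum.cong) auto
  also have "\<dots> = (\<Sum>k<N. (y k)^2) + (\<sigma>^2 - (y i)^2)"
    using i by (simp add: sum.distrib)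
  finally show ?thesis unfolding sqnorm_def by simp
qed

lemma ev_pos:
  assumes "0 < sqnorm N y" "i < N"
  shows "eventually (\<lambda>\<sigma>. 0 < sqnorm N (y(i:=\<sigma>))) (nhds (y i))"
proof -
  have "open {\<sigma>::real. 0 < sqnorm N y - (y i)^2 + \<sigma>^2}"
    by (intro open_Collect_less continuous_intros)
  moreover have "y i \<in> {\<sigma>::real. 0 < sqnorm N y - (y i)^2 + \<sigma>^2}" using assms by simp
  ultimately have "eventually (\<lambda>\<sigma>. \<sigma> \<in> {\<sigma>::real. 0 < sqnorm N y - (y i)^2 + \<sigma>^2}) (nhds (y i))"
    by (rule eventually_nhds_in_open)
  then show ?thesis by eventually_elim (simp add: sqnorm_upd assms)
qed

lemma pdy_radial:
  assumes eq: "\<And>y'. 0 < sqnorm N y' \<Longrightarrow> G x y' = g (sqnorm N y')"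
    and d: "(g has_real_derivative g') (at (sqnorm N y))"
    and pos: "0 < sqnorm N y" and i: "i < N"
  shows "pdy i G x y = g' * (2 * y i)"
proof -
  have "pdy i G x y = deriv (\<lambda>\<sigma>. g (sqnorm N y - (y i)^2 + \<sigma>^2)) (y i)"
    unfolding pdy_def
    by (rule deriv_cong_ev[OF _ refl]) (use ev_pos[OF pos i] in \<open>eventually_elim, simp add: eq sqnorm_upd i\<close>)
  also have "\<dots> = g' * (2 * y i)"
  proof (rule DERIV_imp_deriv)
    have d': "(g has_real_derivative g') (at (sqnorm N y - (y i)^2 + (y i)^2))" using d by simp
    show "((\<lambda>\<sigma>. g (sqnorm N y - (y i)^2 + \<sigma>^2)) has_real_derivative g' * (2 * y i)) (at (y i))"
      by (rule DERIV_chain2[where g="\<lambda>\<sigma>. sqnorm N y - (y i)^2 + \<sigma>^2", OF d']) (auto intro!: derivative_eq_intros)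
  qed
  finally show ?thesis .
qed

lemma pdy_radial2:
  assumes eq: "\<And>y'. 0 < sqnorm N y' \<Longrightarrow> G x y' = g (sqnorm N y') * y' i"
    and d: "(g has_real_derivative g') (at (sqnorm N y))"
    and pos: "0 < sqnorm N y" and i: "i < N"
  shows "pdy i G x y = g' * (2 * y i) * y i + g (sqnorm N y)"
proof -
  have "pdy i G x y = deriv (\<lambda>\<sigma>. g (sqnorm N y - (y i)^2 + \<sigma>^2) * \<sigma>) (y i)"
    unfolding pdy_def
    by (rule deriv_cong_ev[OF _ refl]) (use ev_pos[OF pos i] in \<open>eventually_elim, simp add: eq sqnorm_upd i\<close>)
  also have "\<dots> = g' * (2 * y i) * y i + g (sqnorm N y)"
  proof (rule DERIV_imp_deriv)
    have d': "(g has_real_derivative g') (at (sqnorm N y - (y i)^2 + (y i)^2))" using d by simp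
    have "((\<lambda>\<sigma>. g (sqnorm N y - (y i)^2 + \<sigma>^2)) has_real_derivative g' * (2 * y i)) (at (y i))"
      by (rule DERIV_chain2[where g="\<lambda>\<sigma>. sqnorm N y - (y i)^2 + \<sigma>^2", OF d']) (auto intro!: derivative_eq_intros)
    from DERIV_mult[OF this DERIV_ident]
    show "((\<lambda>\<sigma>. g (sqnorm N y - (y i)^2 + \<sigma>^2) * \<sigma>) has_real_derivative g' * (2 * y i) * y i + g (sqnorm N y)) (at (y i))"
      by simp
  qed
  finally show ?thesis .
qed

lemma grady_lin:
  assumes "\<And>i. i < N \<Longrightarrow> pdy i G x y = k * y i"
  shows "grady_norm N G x y = \<bar>k\<bar> * sqrt (sqnorm N y)"
proof -
  have "(\<Sum>i<N. (pdy i G x y)\<^sup>2) = k^2 * sqnorm N y"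
    unfolding sqnorm_def by (simp add: assms power_mult_distrib sum_distrib_left)
  then show ?thesis unfolding grady_norm_def by (simp add: real_sqrt_mult)
qed

lemma pdx_eq:
  assumes "\<And>\<sigma>. G (upd x j \<sigma>) y = H \<sigma>"
  shows "pdx j G x y = deriv H (x$j)"
  unfolding pdx_def using assms by simp


lemma vfun_eq:
  fixes f :: "real^'n \<Rightarrow> real \<Rightarrow> real"
  assumes "0 < N" shows "vfun N f x y = sqnorm N y powr ((2 - real (CARD('n)+N))/2) * exp (- f x (sqnorm N y / (2 * real N)))"
proof -
  have "sqrt (sqnorm N y) = sqnorm N y powr (1/2)" by (simp add: powr_half_sqrt sqnorm_nonneg)
  then show ?thesis unfolding vfun_def using assms by (simp add: powr_powr)
qed

lemma Dq0:
  assumes fs: "\<forall>ds d x t. 0 < t \<longrightarrow> dline d (pds ds f) x t differentiable (at (dbase d x t))"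
    and q: "0 < q" and N: "0 < N"
  shows "((\<lambda>q. pds ds f x (q / (2 * real N))) has_real_derivative pds (None#ds) f x (q/(2*real N)) / (2 * real N)) (at q)"
proof -
  have t: "0 < q / (2 * real N)" using q N by simp
  have "((\<lambda>q. pds ds f x (q / (2 * real N))) has_real_derivative pds (None#ds) f x (q/(2*real N)) * (1 / (2 * real N))) (at q)"
    by (rule DERIV_chain2[where g="\<lambda>q. q / (2 * real N)", OF D_t[OF fs t]]) (insert N, auto intro!: derivative_eq_intros)
  then show ?thesis by simp
qed

lemma Dq00:
  assumes fs: "\<forall>ds d x t. 0 < t \<longrightarrow> dline d (pds ds f) x t differentiable (at (dbase d x t))"
    and q: "0 < q" and N: "0 < N"
  shows "((\<lambda>q. f x (q / (2 * real N))) has_real_derivative pds [None] f x (q/(2*real N)) / (2 * real N)) (at q)"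
  using Dq0[OF fs q N, of "[]"] by simp

lemma pdx_v:
  fixes f :: "real^'n \<Rightarrow> real \<Rightarrow> real"
  assumes fs: "\<forall>ds d x t. 0 < t \<longrightarrow> dline d (pds ds f) x t differentiable (at (dbase d x t))"
    and Q: "0 < sqnorm N y" and N: "0 < N"
  shows "pdx j (vfun N f) x y = - vfun N f x y * pds [Some j] f x (sqnorm N y / (2 * real N))"
proof -
  let ?a = "(2 - real (CARD('n)+N))/2" and ?s = "sqnorm N y / (2 * real N)"
  have t: "0 < ?s" using Q N by simp
  have "pdx j (vfun N f) x y = deriv (\<lambda>\<sigma>. sqnorm N y powr ?a * exp (- f (upd x j \<sigma>) ?s)) (x$j)"
    by (rule pdx_eq) (simp add: vfun_eq[OF N])
  also have "\<dots> = sqnorm N y powr ?a * (exp (- f x ?s) * (- pds [Some j] f x ?s))"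
    by (rule DERIV_imp_deriv) (auto intro!: derivative_eq_intros D_x0[OF fs t])
  finally show ?thesis by (simp add: vfun_eq[OF N])
qed

lemma pdxx_v:
  fixes f :: "real^'n \<Rightarrow> real \<Rightarrow> real"
  assumes fs: "\<forall>ds d x t. 0 < t \<longrightarrow> dline d (pds ds f) x t differentiable (at (dbase d x t))"
    and Q: "0 < sqnorm N y" and N: "0 < N"
  shows "pdx j (pdx j (vfun N f)) x y = vfun N f x y *
     ((pds [Some j] f x (sqnorm N y / (2 * real N)))^2 - pds [Some j, Some j] f x (sqnorm N y / (2 * real N)))"
proof -
  let ?a = "(2 - real (CARD('n)+N))/2" and ?s = "sqnorm N y / (2 * real N)"
  have t: "0 < ?s" using Q N by simp
  have "pdx j (pdx j (vfun N f)) x y = deriv (\<lambda>\<sigma>. - (sqnorm N y powr ?a * exp (- f (upd x j \<sigma>) ?s)) * pds [Some j] f (upd x j \<sigma>) ?s) (x$j)"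
    by (rule pdx_eq) (simp add: pdx_v[OF fs Q N] vfun_eq[OF N])
  also have "\<dots> = - (sqnorm N y powr ?a * (exp (- f x ?s) * (- pds [Some j] f x ?s))) * pds [Some j] f x ?s
      + - (sqnorm N y powr ?a * exp (- f x ?s)) * pds [Some j, Some j] f x ?s"
    by (rule DERIV_imp_deriv) (auto intro!: derivative_eq_intros D_x0[OF fs t] D_x[OF fs t])
  finally show ?thesis by (simp add: vfun_eq[OF N] algebra_simps power2_eq_square)
qed


lemma dP: "0 < q \<Longrightarrow> ((\<lambda>q. q powr \<alpha>) has_real_derivative q powr \<alpha> * (\<alpha> / q)) (at q)"
  by (rule DERIV_cong[OF has_real_derivative_powr]) (auto simp: powr_diff)

lemma dE:
  fixes f :: "real^'n \<Rightarrow> real \<Rightarrow> real"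
  assumes fs: "\<forall>ds d x t. 0 < t \<longrightarrow> dline d (pds ds f) x t differentiable (at (dbase d x t))"
    and q: "0 < q" and N: "0 < N"
  shows "((\<lambda>q. exp (- f x (q / (2 * real N)))) has_real_derivative
     exp (- f x (q / (2 * real N))) * (- (pds [None] f x (q / (2 * real N)) / (2 * real N)))) (at q)"
  by (rule DERIV_chain2[where f=exp, OF DERIV_exp DERIV_minus[OF Dq00[OF fs q N]]])

lemma dH:
  fixes f :: "real^'n \<Rightarrow> real \<Rightarrow> real"
  assumes fs: "\<forall>ds d x t. 0 < t \<longrightarrow> dline d (pds ds f) x t differentiable (at (dbase d x t))"
    and q: "0 < q" and N: "0 < N"
  shows "((\<lambda>q. \<alpha> / q - pds [None] f x (q / (2 * real N)) / (2 * real N)) has_real_derivative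
     (- \<alpha> / q^2 - pds [None, None] f x (q / (2 * real N)) / (4 * (real N)^2))) (at q)"
proof -
  have a: "((\<lambda>q. \<alpha> / q) has_real_derivative - \<alpha> / q^2) (at q)"
    using q by (auto intro!: derivative_eq_intros simp: power2_eq_square field_simps)
  have "((\<lambda>q. \<alpha> / q - pds [None] f x (q / (2 * real N)) / (2 * real N)) has_real_derivative
     (- \<alpha> / q^2 - pds [None, None] f x (q / (2 * real N)) / (2 * real N) / (2 * real N))) (at q)"
    by (intro DERIV_diff DERIV_cdivide Dq0[OF fs q N] a)
  then show ?thesis by (simp add: field_simps power2_eq_square)
qed

lemma DV:
  fixes f :: "real^'n \<Rightarrow> real \<Rightarrow> real"
  assumes fs: "\<forall>ds d x t. 0 < t \<longrightarrow> dline d (pds ds f) x t differentiable (at (dbase d x t))"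
    and q: "0 < q" and N: "0 < N"
  shows "((\<lambda>q. q powr \<alpha> * exp (- f x (q / (2 * real N)))) has_real_derivative
     (q powr \<alpha> * exp (- f x (q / (2 * real N)))) * (\<alpha> / q - pds [None] f x (q / (2 * real N)) / (2 * real N))) (at q)"
  by (rule DERIV_cong[OF DERIV_mult[OF dP[OF q] dE[OF fs q N]]]) (simp add: field_simps)

lemma DVh:
  fixes f :: "real^'n \<Rightarrow> real \<Rightarrow> real"
  assumes fs: "\<forall>ds d x t. 0 < t \<longrightarrow> dline d (pds ds f) x t differentiable (at (dbase d x t))"
    and q: "0 < q" and N: "0 < N"
  shows "((\<lambda>q. 2 * (q powr \<alpha> * exp (- f x (q / (2 * real N))) * (\<alpha> / q - pds [None] f x (q / (2 * real N)) / (2 * real N))))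
     has_real_derivative
     2 * ((q powr \<alpha> * exp (- f x (q / (2 * real N)))) * ((\<alpha> / q - pds [None] f x (q / (2 * real N)) / (2 * real N))^2
        + (- \<alpha> / q^2 - pds [None, None] f x (q / (2 * real N)) / (4 * (real N)^2))))) (at q)"
  by (rule DERIV_cong[OF DERIV_cmult[OF DERIV_mult[OF DV[OF fs q N] dH[OF fs q N]]]]) (simp add: field_simps power2_eq_square)


lemma heat_f:
  fixes u f :: "real^'n \<Rightarrow> real \<Rightarrow> real"
  assumes fs: "\<forall>ds d x t. 0 < t \<longrightarrow> dline d (pds ds f) x t differentiable (at (dbase d x t))"
    and u_f: "\<forall>x t. 0 < t \<longrightarrow> u x t = t powr (- real CARD('n) / 2) * exp (- f x t)"
    and heat: "\<forall>x t. 0 < t \<longrightarrow>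
          ((\<lambda>s. u x s) has_real_derivative (\<Sum>j\<in>UNIV. pd (Some j) (pd (Some j) u) x t)) (at t)"
    and t: "0 < t"
  shows "(\<Sum>j\<in>UNIV. (pds [Some j] f x t)^2 - pds [Some j, Some j] f x t) = - pds [None] f x t - real CARD('n) / (2 * t)"
proof -
  let ?p = "t powr (- real CARD('n) / 2)"
  have pu1: "pd (Some j) u x' t = - (?p * exp (- f x' t)) * pds [Some j] f x' t" for j x'
  proof -
    have "pd (Some j) u x' t = deriv (\<lambda>\<sigma>. ?p * exp (- f (upd x' j \<sigma>) t)) (x'$j)"
      unfolding pd_def dline_def dbase_def using u_f t by simp
    also have "\<dots> = ?p * (exp (- f x' t) * (- pds [Some j] f x' t))"
      by (rule DERIV_imp_deriv) (auto intro!: derivative_eq_intros D_x0[OF fs t])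
    finally show ?thesis by simp
  qed
  have pu2: "pd (Some j) (pd (Some j) u) x t = ?p * exp (- f x t) * ((pds [Some j] f x t)^2 - pds [Some j, Some j] f x t)" for j
  proof -
    have "pd (Some j) (pd (Some j) u) x t = deriv (\<lambda>\<sigma>. - (?p * exp (- f (upd x j \<sigma>) t)) * pds [Some j] f (upd x j \<sigma>) t) (x$j)"
      unfolding pd_def[of "Some j" "pd (Some j) u"] dline_def dbase_def by (simp add: pu1)
    also have "\<dots> = - (?p * (exp (- f x t) * (- pds [Some j] f x t))) * pds [Some j] f x t
        + - (?p * exp (- f x t)) * pds [Some j, Some j] f x t"
      by (rule DERIV_imp_deriv) (auto intro!: derivative_eq_intros D_x0[OF fs t] D_x[OF fs t])
    finally show ?thesis by (simp add: algebra_simps power2_eq_square)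
  qed
  have d1: "((\<lambda>s. s powr (- real CARD('n) / 2) * exp (- f x s)) has_real_derivative
       ?p * (- real CARD('n) / 2 / t) * exp (- f x t) + exp (- f x t) * (- pds [None] f x t) * ?p) (at t)"
    by (rule DERIV_mult[OF dP[OF t] DERIV_chain2[where f=exp, OF DERIV_exp DERIV_minus[OF D_t0[OF fs t]]]])
  have d2: "((\<lambda>s. u x s) has_real_derivative
       ?p * (- real CARD('n) / 2 / t) * exp (- f x t) + exp (- f x t) * (- pds [None] f x t) * ?p) (at t)"
    by (rule has_field_derivative_transform_within_open[OF d1, of "{0<..}"]) (use t u_f in auto)
  have "(\<Sum>j\<in>UNIV. pd (Some j) (pd (Some j) u) x t) =
       ?p * (- real CARD('n) / 2 / t) * exp (- f x t) + exp (- f x t) * (- pds [None] f x t) * ?p"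
    using DERIV_unique[OF heat[rule_format, OF t] d2] .
  then have "?p * exp (- f x t) * (\<Sum>j\<in>UNIV. (pds [Some j] f x t)^2 - pds [Some j, Some j] f x t) =
       ?p * exp (- f x t) * (- pds [None] f x t - real CARD('n) / (2 * t))"
    by (simp add: pu2 sum_distrib_left algebra_simps)
  moreover have "?p * exp (- f x t) \<noteq> 0" using t by simp
  ultimately show ?thesis by simp
qed


lemma alg:
  fixes Q s NN n fs fss \<alpha> :: real
  assumes "Q = 2 * NN * s" "0 < NN" "0 < s" "\<alpha> = (2 - (n + NN)) / 2"
  shows "Q * ((- fs - n / (2 * s)) + 4 * Q * ((\<alpha> / Q - fs / (2 * NN))^2 + (- \<alpha> / Q^2 - fss / (4 * NN^2)))
     + 2 * NN * (\<alpha> / Q - fs / (2 * NN))) = n * (n - 2) + 4 * s * (n - 2) * fs + 4 * s^2 * (fs^2 - fss)"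
  using assms(2,3) unfolding assms(1) assms(4) by (simp add: field_simps power2_eq_square)

lemma pdy_v:
  fixes f :: "real^'n \<Rightarrow> real \<Rightarrow> real"
  assumes fs: "\<forall>ds d x t. 0 < t \<longrightarrow> dline d (pds ds f) x t differentiable (at (dbase d x t))"
    and Q: "0 < sqnorm N y" and N: "0 < N" and i: "i < N"
  shows "pdy i (vfun N f) x y = (sqnorm N y powr ((2 - real (CARD('n)+N))/2) * exp (- f x (sqnorm N y / (2 * real N))))
     * (((2 - real (CARD('n)+N))/2) / sqnorm N y - pds [None] f x (sqnorm N y / (2 * real N)) / (2 * real N)) * (2 * y i)"
  by (rule pdy_radial[OF _ DV[OF fs Q N] Q i]) (simp add: vfun_eq[OF N])

lemma pdyy_v:
  fixes f :: "real^'n \<Rightarrow> real \<Rightarrow> real"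
  assumes fs: "\<forall>ds d x t. 0 < t \<longrightarrow> dline d (pds ds f) x t differentiable (at (dbase d x t))"
    and Q: "0 < sqnorm N y" and N: "0 < N" and i: "i < N"
  defines "\<alpha> \<equiv> (2 - real (CARD('n)+N))/2"
  shows "pdy i (pdy i (vfun N f)) x y =
     2 * ((sqnorm N y powr \<alpha> * exp (- f x (sqnorm N y / (2 * real N)))) * ((\<alpha> / sqnorm N y - pds [None] f x (sqnorm N y / (2 * real N)) / (2 * real N))^2
        + (- \<alpha> / (sqnorm N y)^2 - pds [None, None] f x (sqnorm N y / (2 * real N)) / (4 * (real N)^2)))) * (2 * y i) * y i
     + 2 * (sqnorm N y powr \<alpha> * exp (- f x (sqnorm N y / (2 * real N))) * (\<alpha> / sqnorm N y - pds [None] f x (sqnorm N y / (2 * real N)) / (2 * real N)))"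
  unfolding \<alpha>_def
  by (rule pdy_radial2[OF _ DVh[OF fs Q N] Q i]) (simp add: pdy_v[OF fs _ N i])

lemma lap_v:
  fixes f :: "real^'n \<Rightarrow> real \<Rightarrow> real"
  assumes fs: "\<forall>ds d x t. 0 < t \<longrightarrow> dline d (pds ds f) x t differentiable (at (dbase d x t))"
    and Q: "0 < sqnorm N y" and N: "0 < N"
  defines "\<alpha> \<equiv> (2 - real (CARD('n)+N))/2" and "s \<equiv> sqnorm N y / (2 * real N)"
  shows "laplacian N (vfun N f) x y = vfun N f x y *
     ((\<Sum>j\<in>UNIV. (pds [Some j] f x s)^2 - pds [Some j, Some j] f x s)
      + 4 * sqnorm N y * ((\<alpha> / sqnorm N y - pds [None] f x s / (2 * real N))^2
        + (- \<alpha> / (sqnorm N y)^2 - pds [None, None] f x s / (4 * (real N)^2)))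
      + 2 * real N * (\<alpha> / sqnorm N y - pds [None] f x s / (2 * real N)))"
proof -
  let ?V = "vfun N f x y"
  let ?A = "(\<alpha> / sqnorm N y - pds [None] f x s / (2 * real N))^2
        + (- \<alpha> / (sqnorm N y)^2 - pds [None, None] f x s / (4 * (real N)^2))"
  let ?h = "\<alpha> / sqnorm N y - pds [None] f x s / (2 * real N)"
  have V: "?V = sqnorm N y powr \<alpha> * exp (- f x s)" by (simp add: vfun_eq[OF N] \<alpha>_def s_def)
  have "(\<Sum>i<N. pdy i (pdy i (vfun N f)) x y) = (\<Sum>i<N. 4 * ?V * ?A * (y i)^2 + 2 * ?V * ?h)"
    by (rule sum.cong[OF refl]) (simp add: pdyy_v[OF fs Q N] V \<alpha>_def s_def power2_eq_square algebra_simps)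
  also have "\<dots> = 4 * ?V * ?A * sqnorm N y + 2 * real N * ?V * ?h"
    by (simp add: sum.distrib sum_distrib_left[symmetric] sqnorm_def)
  finally have Y: "(\<Sum>i<N. pdy i (pdy i (vfun N f)) x y) = 4 * ?V * ?A * sqnorm N y + 2 * real N * ?V * ?h" .
  have X: "(\<Sum>j\<in>UNIV. pdx j (pdx j (vfun N f)) x y) = ?V * (\<Sum>j\<in>UNIV. (pds [Some j] f x s)^2 - pds [Some j, Some j] f x s)"
    by (simp add: pdxx_v[OF fs Q N] s_def sum_distrib_left)
  show ?thesis unfolding laplacian_def X Y by (simp add: algebra_simps)
qed

definition Psi :: "real \<Rightarrow> (real^'n \<Rightarrow> real \<Rightarrow> real) \<Rightarrow> real^'n \<Rightarrow> real \<Rightarrow> real" where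
  "Psi k f x s = exp (2 * k * f x s) * (real CARD('n) * (real CARD('n) - 2)
     + 4 * s * (real CARD('n) - 2) * pds [None] f x s + 4 * s^2 * ((pds [None] f x s)^2 - pds [None, None] f x s))"

lemma bfun_eq:
  fixes f :: "real^'n \<Rightarrow> real \<Rightarrow> real"
  assumes Q: "0 < sqnorm N y" and N3: "3 \<le> N"
  shows "bfun N f x y = sqrt (sqnorm N y) * exp (f x (sqnorm N y / (2 * real N)) / (real (CARD('n)+N) - 2))"
proof -
  have N: "0 < N" using N3 by simp
  have m: "2 - real (CARD('n)+N) \<noteq> 0" using N3 by simp
  have "bfun N f x y = (sqnorm N y powr ((2 - real (CARD('n)+N))/2)) powr (1 / (2 - real (CARD('n)+N)))
      * exp (- f x (sqnorm N y / (2 * real N))) powr (1 / (2 - real (CARD('n)+N)))"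
    unfolding bfun_def vfun_eq[OF N] by (rule powr_mult)
  also have "\<dots> = sqnorm N y powr (1/2) * exp (- f x (sqnorm N y / (2 * real N)) * (1 / (2 - real (CARD('n)+N))))"
    using m by (simp add: powr_powr powr_def)
  also have "\<dots> = sqrt (sqnorm N y) * exp (f x (sqnorm N y / (2 * real N)) / (real (CARD('n)+N) - 2))"
    using Q by (simp add: powr_half_sqrt minus_divide_right)
  finally show ?thesis .
qed


lemma prefactor:
  fixes Q F c m \<alpha> :: real and mm :: nat
  assumes Q: "0 < Q" and c: "c = real mm - 2" "0 < c" and \<alpha>: "\<alpha> = (2 - real mm) / 2"
  shows "(sqrt Q * exp (F / c)) ^ mm * (Q powr \<alpha> * exp (- F)) = Q * exp (2 * (1 / c) * F)"
proof -
  have "sqrt Q ^ mm = Q powr (real mm / 2)"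
    using Q by (simp add: powr_half_sqrt[symmetric] powr_realpow[symmetric] powr_powr)
  then have A: "sqrt Q ^ mm * Q powr \<alpha> = Q"
    using Q by (simp add: \<alpha> powr_add[symmetric] field_simps)
  have "exp (F / c) ^ mm * exp (- F) = exp (real mm * (F / c) - F)"
    by (simp add: exp_of_nat_mult[symmetric] exp_diff[symmetric] exp_minus field_simps)
  also have "real mm * (F / c) - F = 2 * (1 / c) * F"
  proof -
    have "real mm = c + 2" using c by simp
    then show ?thesis using c(2) by (simp add: field_simps)
  qed
  finally have B: "exp (F / c) ^ mm * exp (- F) = exp (2 * (1 / c) * F)" .
  have "(sqrt Q * exp (F / c)) ^ mm * (Q powr \<alpha> * exp (- F)) = (sqrt Q ^ mm * Q powr \<alpha>) * (exp (F / c) ^ mm * exp (- F))"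
    by (simp add: power_mult_distrib algebra_simps)
  then show ?thesis using A B by simp
qed

lemma psi_eq:
  fixes u f :: "real^'n \<Rightarrow> real \<Rightarrow> real"
  assumes fs: "\<forall>ds d x t. 0 < t \<longrightarrow> dline d (pds ds f) x t differentiable (at (dbase d x t))"
    and u_f: "\<forall>x t. 0 < t \<longrightarrow> u x t = t powr (- real CARD('n) / 2) * exp (- f x t)"
    and heat: "\<forall>x t. 0 < t \<longrightarrow>
          ((\<lambda>s. u x s) has_real_derivative (\<Sum>j\<in>UNIV. pd (Some j) (pd (Some j) u) x t)) (at t)"
    and Q: "0 < sqnorm N y" and N3: "3 \<le> N"
  shows "psifun N f x y = Psi (1 / (real (CARD('n)+N) - 2)) f x (sqnorm N y / (2 * real N))"
proof -
  have N: "0 < N" using N3 by simp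
  define s where "s = sqnorm N y / (2 * real N)"
  define \<alpha> where "\<alpha> = (2 - real (CARD('n)+N))/2"
  define c where "c = real (CARD('n)+N) - 2"
  have s: "0 < s" using Q N by (simp add: s_def)
  have c: "0 < c" using N3 by (simp add: c_def)
  have H: "(\<Sum>j\<in>UNIV. (pds [Some j] f x s)^2 - pds [Some j, Some j] f x s) = - pds [None] f x s - real CARD('n) / (2 * s)"
    by (rule heat_f[OF fs u_f heat s])
  have pre: "(sqrt (sqnorm N y) * exp (f x s / c)) ^ (CARD('n)+N) * (sqnorm N y powr \<alpha> * exp (- f x s)) = sqnorm N y * exp (2 * (1 / c) * f x s)"
    by (rule prefactor[OF Q]) (use c in \<open>simp_all add: c_def \<alpha>_def\<close>)
  have "psifun N f x y = (sqrt (sqnorm N y) * exp (f x s / c)) ^ (CARD('n)+N) * (sqnorm N y powr \<alpha> * exp (- f x s)) *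
     ((- pds [None] f x s - real CARD('n) / (2 * s))
      + 4 * sqnorm N y * ((\<alpha> / sqnorm N y - pds [None] f x s / (2 * real N))^2
        + (- \<alpha> / (sqnorm N y)^2 - pds [None, None] f x s / (4 * (real N)^2)))
      + 2 * real N * (\<alpha> / sqnorm N y - pds [None] f x s / (2 * real N)))"
    unfolding psifun_def lap_v[OF fs Q N] bfun_eq[OF Q N3] H[symmetric]
    by (simp add: vfun_eq[OF N] s_def \<alpha>_def c_def)
  also have "\<dots> = exp (2 * (1 / c) * f x s) * (sqnorm N y *
     ((- pds [None] f x s - real CARD('n) / (2 * s))
      + 4 * sqnorm N y * ((\<alpha> / sqnorm N y - pds [None] f x s / (2 * real N))^2
        + (- \<alpha> / (sqnorm N y)^2 - pds [None, None] f x s / (4 * (real N)^2)))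
      + 2 * real N * (\<alpha> / sqnorm N y - pds [None] f x s / (2 * real N))))"
    unfolding pre by simp
  also have "\<dots> = Psi (1 / c) f x s"
    unfolding Psi_def
    by (subst alg[where NN="real N" and s=s and n="real CARD('n)"]) (use N s in \<open>simp_all add: s_def \<alpha>_def\<close>)
  finally show ?thesis by (simp add: s_def c_def)
qed


definition PP :: "(real^'n \<Rightarrow> real \<Rightarrow> real) \<Rightarrow> real^'n \<Rightarrow> real \<Rightarrow> real" where
  "PP f x s = real CARD('n) * (real CARD('n) - 2)
     + 4 * s * (real CARD('n) - 2) * pds [None] f x s + 4 * s^2 * ((pds [None] f x s)^2 - pds [None, None] f x s)"

lemma Psi_PP: "Psi k f x s = exp (2 * k * f x s) * PP f x s"
  by (simp add: Psi_def PP_def)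

definition Psis :: "real \<Rightarrow> (real^'n \<Rightarrow> real \<Rightarrow> real) \<Rightarrow> real^'n \<Rightarrow> real \<Rightarrow> real" where
  "Psis k f x s = exp (2 * k * f x s) * (2 * k * pds [None] f x s) * PP f x s
     + exp (2 * k * f x s) * (4 * (real CARD('n) - 2) * pds [None] f x s + 4 * s * (real CARD('n) - 2) * pds [None, None] f x s
        + 8 * s * ((pds [None] f x s)^2 - pds [None, None] f x s)
        + 4 * s^2 * (2 * pds [None] f x s * pds [None, None] f x s - pds [None, None, None] f x s))"

definition Psij :: "real \<Rightarrow> (real^'n \<Rightarrow> real \<Rightarrow> real) \<Rightarrow> real^'n \<Rightarrow> real \<Rightarrow> 'n \<Rightarrow> real" where
  "Psij k f x s j = exp (2 * k * f x s) * (2 * k * pds [Some j] f x s) * PP f x s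
     + exp (2 * k * f x s) * (4 * s * (real CARD('n) - 2) * pds [Some j, None] f x s
        + 4 * s^2 * (2 * pds [None] f x s * pds [Some j, None] f x s - pds [Some j, None, None] f x s))"

lemma DPs:
  fixes f :: "real^'n \<Rightarrow> real \<Rightarrow> real"
  assumes fs: "\<forall>ds d x t. 0 < t \<longrightarrow> dline d (pds ds f) x t differentiable (at (dbase d x t))"
    and s: "0 < s"
  shows "((\<lambda>s. Psi k f x s) has_real_derivative Psis k f x s) (at s)"
  unfolding Psi_def Psis_def PP_def
  by (rule DERIV_cong, (rule derivative_eq_intros D_t0[OF fs s] D_t[OF fs s] refl)+) (simp add: algebra_simps power2_eq_square)

lemma DPx:
  fixes f :: "real^'n \<Rightarrow> real \<Rightarrow> real"
  assumes fs: "\<forall>ds d x t. 0 < t \<longrightarrow> dline d (pds ds f) x t differentiable (at (dbase d x t))"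
    and s: "0 < s"
  shows "((\<lambda>\<sigma>. Psi k f (upd x j \<sigma>) s) has_real_derivative Psij k f x s j) (at (x$j))"
  unfolding Psi_def Psij_def PP_def
  by (rule DERIV_cong, (rule derivative_eq_intros D_x0[OF fs s] D_x[OF fs s] refl)+) (simp add: algebra_simps power2_eq_square)


lemma sqnorm_upd_x: "sqnorm N y = sqnorm N y" ..

lemma pdx_psi:
  fixes u f :: "real^'n \<Rightarrow> real \<Rightarrow> real"
  assumes fs: "\<forall>ds d x t. 0 < t \<longrightarrow> dline d (pds ds f) x t differentiable (at (dbase d x t))"
    and u_f: "\<forall>x t. 0 < t \<longrightarrow> u x t = t powr (- real CARD('n) / 2) * exp (- f x t)"
    and heat: "\<forall>x t. 0 < t \<longrightarrow>
          ((\<lambda>s. u x s) has_real_derivative (\<Sum>j\<in>UNIV. pd (Some j) (pd (Some j) u) x t)) (at t)"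
    and Q: "0 < sqnorm N y" and N3: "3 \<le> N"
  shows "pdx j (psifun N f) x y = Psij (1 / (real (CARD('n)+N) - 2)) f x (sqnorm N y / (2 * real N)) j"
proof -
  have s: "0 < sqnorm N y / (2 * real N)" using Q N3 by simp
  have "pdx j (psifun N f) x y = deriv (\<lambda>\<sigma>. Psi (1 / (real (CARD('n)+N) - 2)) f (upd x j \<sigma>) (sqnorm N y / (2 * real N))) (x$j)"
    by (rule pdx_eq) (rule psi_eq[OF fs u_f heat Q N3])
  also have "\<dots> = Psij (1 / (real (CARD('n)+N) - 2)) f x (sqnorm N y / (2 * real N)) j"
    by (rule DERIV_imp_deriv[OF DPx[OF fs s]])
  finally show ?thesis .
qed

lemma grady_psi:
  fixes u f :: "real^'n \<Rightarrow> real \<Rightarrow> real"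
  assumes fs: "\<forall>ds d x t. 0 < t \<longrightarrow> dline d (pds ds f) x t differentiable (at (dbase d x t))"
    and u_f: "\<forall>x t. 0 < t \<longrightarrow> u x t = t powr (- real CARD('n) / 2) * exp (- f x t)"
    and heat: "\<forall>x t. 0 < t \<longrightarrow>
          ((\<lambda>s. u x s) has_real_derivative (\<Sum>j\<in>UNIV. pd (Some j) (pd (Some j) u) x t)) (at t)"
    and Q: "0 < sqnorm N y" and N3: "3 \<le> N"
  shows "grady_norm N (psifun N f) x y = \<bar>Psis (1 / (real (CARD('n)+N) - 2)) f x (sqnorm N y / (2 * real N)) / real N\<bar> * sqrt (sqnorm N y)"
proof (rule grady_lin)
  fix i assume i: "i < N"
  have N: "0 < N" using N3 by simp
  have s: "0 < sqnorm N y / (2 * real N)" using Q N3 by simp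
  have d: "((\<lambda>q. Psi (1 / (real (CARD('n)+N) - 2)) f x (q / (2 * real N))) has_real_derivative
      Psis (1 / (real (CARD('n)+N) - 2)) f x (sqnorm N y / (2 * real N)) * (1 / (2 * real N))) (at (sqnorm N y))"
    by (rule DERIV_chain2[where g="\<lambda>q. q / (2 * real N)", OF DPs[OF fs s]]) (insert N, auto intro!: derivative_eq_intros)
  have "pdy i (psifun N f) x y = Psis (1 / (real (CARD('n)+N) - 2)) f x (sqnorm N y / (2 * real N)) * (1 / (2 * real N)) * (2 * y i)"
    by (rule pdy_radial[OF _ d Q i]) (rule psi_eq[OF fs u_f heat _ N3])
  then show "pdy i (psifun N f) x y = Psis (1 / (real (CARD('n)+N) - 2)) f x (sqnorm N y / (2 * real N)) / real N * y i"
    by simp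
qed

lemma pdx_b:
  fixes f :: "real^'n \<Rightarrow> real \<Rightarrow> real"
  assumes fs: "\<forall>ds d x t. 0 < t \<longrightarrow> dline d (pds ds f) x t differentiable (at (dbase d x t))"
    and Q: "0 < sqnorm N y" and N3: "3 \<le> N"
  shows "pdx j (bfun N f) x y = sqrt (sqnorm N y) * exp (f x (sqnorm N y / (2 * real N)) / (real (CARD('n)+N) - 2))
     * (pds [Some j] f x (sqnorm N y / (2 * real N)) / (real (CARD('n)+N) - 2))"
proof -
  have s: "0 < sqnorm N y / (2 * real N)" using Q N3 by simp
  have "pdx j (bfun N f) x y = deriv (\<lambda>\<sigma>. sqrt (sqnorm N y) * exp (f (upd x j \<sigma>) (sqnorm N y / (2 * real N)) / (real (CARD('n)+N) - 2))) (x$j)"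
    by (rule pdx_eq) (rule bfun_eq[OF Q N3])
  also have "\<dots> = sqrt (sqnorm N y) * (exp (f x (sqnorm N y / (2 * real N)) / (real (CARD('n)+N) - 2))
     * (pds [Some j] f x (sqnorm N y / (2 * real N)) / (real (CARD('n)+N) - 2)))"
    by (rule DERIV_imp_deriv, rule DERIV_cong[OF DERIV_cmult[OF DERIV_chain2[where f=exp, OF DERIV_exp DERIV_cdivide[OF D_x0[OF fs s]]]]]) simp
  finally show ?thesis by simp
qed

lemma algb:
  fixes R c NN E p :: real
  assumes "0 < R" "0 < c" "0 < NN"
  shows "2 * (E / (2 * R) + R * (E * (p / (2 * NN) / c))) * R = E * (1 + 2 * (R^2 / (2 * NN)) * p / c)"
  using assms by (simp add: field_simps power2_eq_square)

lemma grady_b: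
  fixes f :: "real^'n \<Rightarrow> real \<Rightarrow> real"
  assumes fs: "\<forall>ds d x t. 0 < t \<longrightarrow> dline d (pds ds f) x t differentiable (at (dbase d x t))"
    and Q: "0 < sqnorm N y" and N3: "3 \<le> N"
  shows "grady_norm N (bfun N f) x y = \<bar>exp (f x (sqnorm N y / (2 * real N)) / (real (CARD('n)+N) - 2))
     * (1 + 2 * (sqnorm N y / (2 * real N)) * pds [None] f x (sqnorm N y / (2 * real N)) / (real (CARD('n)+N) - 2))\<bar>"
proof -
  let ?c = "real (CARD('n)+N) - 2"
  let ?E = "exp (f x (sqnorm N y / (2 * real N)) / ?c)"
  let ?g' = "?E / (2 * sqrt (sqnorm N y)) + sqrt (sqnorm N y) * (?E * (pds [None] f x (sqnorm N y / (2 * real N)) / (2 * real N) / ?c))"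
  have N: "0 < N" using N3 by simp
  have d: "((\<lambda>q. sqrt q * exp (f x (q / (2 * real N)) / ?c)) has_real_derivative ?g') (at (sqnorm N y))"
    by (rule DERIV_cong[OF DERIV_mult[OF DERIV_real_sqrt[OF Q] DERIV_chain2[where f=exp, OF DERIV_exp DERIV_cdivide[OF Dq00[OF fs Q N]]]]])
       (use Q in \<open>simp add: field_simps\<close>)
  have "grady_norm N (bfun N f) x y = \<bar>?g' * 2\<bar> * sqrt (sqnorm N y)"
  proof (rule grady_lin)
    fix i assume i: "i < N"
    have "pdy i (bfun N f) x y = ?g' * (2 * y i)"
      by (rule pdy_radial[OF _ d Q i]) (rule bfun_eq[OF _ N3])
    then show "pdy i (bfun N f) x y = ?g' * 2 * y i"
      by (simp only: mult.assoc)
  qed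
  also have "\<dots> = \<bar>2 * ?g' * sqrt (sqnorm N y)\<bar>" using Q by (simp add: abs_mult)
  also have "2 * ?g' * sqrt (sqnorm N y) = ?E * (1 + 2 * (sqnorm N y / (2 * real N)) * pds [None] f x (sqnorm N y / (2 * real N)) / ?c)"
    using algb[of "sqrt (sqnorm N y)" ?c "real N" ?E "pds [None] f x (sqnorm N y / (2 * real N))"] Q N3 by simp
  finally show ?thesis .
qed


definition bdd :: "'a set \<Rightarrow> ('a \<Rightarrow> real) \<Rightarrow> bool" where
  "bdd S g \<longleftrightarrow> (\<exists>C. \<forall>z\<in>S. \<bar>g z\<bar> \<le> C)"

lemma bdd_const: "bdd S (\<lambda>z. c)"
  unfolding bdd_def by blast

lemma bdd_add: "bdd S a \<Longrightarrow> bdd S b \<Longrightarrow> bdd S (\<lambda>z. a z + b z)"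
  unfolding bdd_def
proof (elim exE)
  fix A B assume A: "\<forall>z\<in>S. \<bar>a z\<bar> \<le> A" and B: "\<forall>z\<in>S. \<bar>b z\<bar> \<le> B"
  show "\<exists>C. \<forall>z\<in>S. \<bar>a z + b z\<bar> \<le> C"
    by (rule exI[of _ "A + B"]) (use A B in \<open>force intro: order.trans[OF abs_triangle_ineq] add_mono\<close>)
qed

lemma bdd_minus: "bdd S a \<Longrightarrow> bdd S (\<lambda>z. - a z)"
  unfolding bdd_def by simp

lemma bdd_diff: "bdd S a \<Longrightarrow> bdd S b \<Longrightarrow> bdd S (\<lambda>z. a z - b z)"
  using bdd_add[of S a "\<lambda>z. - b z"] bdd_minus[of S b] by simp

lemma bdd_mult: "bdd S a \<Longrightarrow> bdd S b \<Longrightarrow> bdd S (\<lambda>z. a z * b z)"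
  unfolding bdd_def
proof (elim exE)
  fix A B assume A: "\<forall>z\<in>S. \<bar>a z\<bar> \<le> A" and B: "\<forall>z\<in>S. \<bar>b z\<bar> \<le> B"
  show "\<exists>C. \<forall>z\<in>S. \<bar>a z * b z\<bar> \<le> C"
  proof (rule exI[of _ "A * B"], intro ballI)
    fix z assume z: "z \<in> S"
    have "\<bar>a z * b z\<bar> = \<bar>a z\<bar> * \<bar>b z\<bar>" by (simp add: abs_mult)
    also have "\<dots> \<le> A * B" using A B z by (intro mult_mono) force+
    finally show "\<bar>a z * b z\<bar> \<le> A * B" .
  qed
qed

lemma bdd_divide: "bdd S a \<Longrightarrow> bdd S (\<lambda>z. inverse (b z)) \<Longrightarrow> bdd S (\<lambda>z. a z / b z)"
  using bdd_mult[of S a "\<lambda>z. inverse (b z)"] by (simp add: divide_inverse)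

lemma bdd_pow: "bdd S a \<Longrightarrow> bdd S (\<lambda>z. a z ^ n)"
  by (induction n) (auto intro: bdd_mult bdd_const)

lemma bdd_exp: "bdd S a \<Longrightarrow> bdd S (\<lambda>z. exp (a z))"
  unfolding bdd_def
proof (elim exE)
  fix A assume A: "\<forall>z\<in>S. \<bar>a z\<bar> \<le> A"
  show "\<exists>C. \<forall>z\<in>S. \<bar>exp (a z)\<bar> \<le> C"
    by (rule exI[of _ "exp A"]) (use A in \<open>force\<close>)
qed

lemmas bdd_rules = bdd_add bdd_diff bdd_minus bdd_mult bdd_divide bdd_pow bdd_exp bdd_const

definition zN :: "nat \<times> (real^'n) \<times> real \<times> 'n \<Rightarrow> nat" where "zN z = fst z"
definition zx :: "nat \<times> (real^'n) \<times> real \<times> 'n \<Rightarrow> real^'n" where "zx z = fst (snd z)"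
definition zs :: "nat \<times> (real^'n) \<times> real \<times> 'n \<Rightarrow> real" where "zs z = fst (snd (snd z))"
definition zj :: "nat \<times> (real^'n) \<times> real \<times> 'n \<Rightarrow> 'n" where "zj z = snd (snd (snd z))"

definition ZS :: "real \<Rightarrow> real \<Rightarrow> (nat \<times> (real^'n) \<times> real \<times> 'n) set" where
  "ZS \<tau>1 \<tau>2 = {z. 3 \<le> zN z \<and> \<tau>1 \<le> zs z \<and> zs z \<le> \<tau>2}"

lemma atom_fixed:
  fixes f :: "real^'n \<Rightarrow> real \<Rightarrow> real"
  assumes fb: "\<forall>ds. \<exists>B. \<forall>x t. \<tau>1 \<le> t \<and> t \<le> \<tau>2 \<longrightarrow> \<bar>pds ds f x t\<bar> \<le> B"
  shows "bdd (ZS \<tau>1 \<tau>2) (\<lambda>z. pds ds f (zx z) (zs z))"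
proof -
  obtain B where "\<forall>x t. \<tau>1 \<le> t \<and> t \<le> \<tau>2 \<longrightarrow> \<bar>pds ds f x t\<bar> \<le> B" using fb by blast
  then show ?thesis unfolding bdd_def ZS_def by auto
qed

lemma atom_f:
  fixes f :: "real^'n \<Rightarrow> real \<Rightarrow> real"
  assumes fb: "\<forall>ds. \<exists>B. \<forall>x t. \<tau>1 \<le> t \<and> t \<le> \<tau>2 \<longrightarrow> \<bar>pds ds f x t\<bar> \<le> B"
  shows "bdd (ZS \<tau>1 \<tau>2) (\<lambda>z. f (zx z) (zs z))"
  using atom_fixed[OF fb, of "[]"] by simp

lemma atom_j:
  fixes f :: "real^'n \<Rightarrow> real \<Rightarrow> real"
  assumes fb: "\<forall>ds. \<exists>B. \<forall>x t. \<tau>1 \<le> t \<and> t \<le> \<tau>2 \<longrightarrow> \<bar>pds ds f x t\<bar> \<le> B"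
  shows "bdd (ZS \<tau>1 \<tau>2) (\<lambda>z. pds (Some (zj z) # ds) f (zx z) (zs z))"
proof -
  have "\<forall>j. \<exists>B. \<forall>x t. \<tau>1 \<le> t \<and> t \<le> \<tau>2 \<longrightarrow> \<bar>pds (Some j # ds) f x t\<bar> \<le> B" using fb by blast
  then obtain B where B: "\<And>j x t. \<tau>1 \<le> t \<and> t \<le> \<tau>2 \<Longrightarrow> \<bar>pds (Some j # ds) f x t\<bar> \<le> B j"
    by metis
  have "\<bar>pds (Some j # ds) f x t\<bar> \<le> (\<Sum>j\<in>UNIV. \<bar>B j\<bar>)" if "\<tau>1 \<le> t \<and> t \<le> \<tau>2" for j x t
  proof -
    have "\<bar>pds (Some j # ds) f x t\<bar> \<le> \<bar>B j\<bar>" using B[OF that, of j x] by simp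
    also have "\<dots> \<le> (\<Sum>j\<in>UNIV. \<bar>B j\<bar>)" by (rule member_le_sum) auto
    finally show ?thesis .
  qed
  then show ?thesis unfolding bdd_def ZS_def by auto
qed

lemma atom_s: "bdd (ZS \<tau>1 \<tau>2) (\<lambda>z. zs z)"
  unfolding bdd_def ZS_def by (rule exI[of _ "\<bar>\<tau>1\<bar> + \<bar>\<tau>2\<bar>"]) auto

lemma atom_sqrt: "0 < \<tau>1 \<Longrightarrow> bdd (ZS \<tau>1 \<tau>2) (\<lambda>z. sqrt (2 * zs z))"
proof -
  assume t: "0 < \<tau>1"
  have "\<bar>sqrt (2 * zs z)\<bar> \<le> sqrt (2 * \<tau>2)" if "z \<in> ZS \<tau>1 \<tau>2" for z :: "nat \<times> (real^('n::finite)) \<times> real \<times> 'n"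
    using that t unfolding ZS_def by auto
  then show ?thesis unfolding bdd_def by blast
qed

lemma atom_invc: "bdd (ZS \<tau>1 \<tau>2 :: (nat \<times> (real^('n::finite)) \<times> real \<times> 'n) set) (\<lambda>z. inverse (real (CARD('n) + zN z) - 2 :: real))"
proof -
  have "\<bar>inverse (real (CARD('n) + zN z) - 2 :: real)\<bar> \<le> 1" if "z \<in> ZS \<tau>1 \<tau>2" for z :: "nat \<times> (real^('n::finite)) \<times> real \<times> 'n"
    using that unfolding ZS_def by (auto simp: field_simps)
  then show ?thesis unfolding bdd_def by blast
qed

lemma aux_lin: "(3::real) \<le> a \<Longrightarrow> 1 \<le> b \<Longrightarrow> a \<le> 2 * (b + a - 2)" by simp

lemma atom_Nc: "bdd (ZS \<tau>1 \<tau>2 :: (nat \<times> (real^('n::finite)) \<times> real \<times> 'n) set) (\<lambda>z. real (zN z) / (real (CARD('n) + zN z) - 2 :: real))"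
proof -
  have "\<bar>real (zN z) / (real (CARD('n) + zN z) - 2 :: real)\<bar> \<le> 2" if "z \<in> ZS \<tau>1 \<tau>2" for z :: "nat \<times> (real^('n::finite)) \<times> real \<times> 'n"
  proof -
    have N: "3 \<le> zN z" using that unfolding ZS_def by auto
    have c: "0 < real (CARD('n) + zN z) - 2" using N by simp
    have n: "1 \<le> real CARD('n)" by simp
    have N': "3 \<le> real (zN z)" using N by simp
    have "real (zN z) \<le> 2 * (real (CARD('n) + zN z) - 2)" using aux_lin[OF N' n] by simp
    then show ?thesis using c by (simp add: field_simps)
  qed
  then show ?thesis unfolding bdd_def by blast
qed


lemma bounds:
  fixes f :: "real^'n \<Rightarrow> real \<Rightarrow> real"
  assumes fb: "\<forall>ds. \<exists>B. \<forall>x t. \<tau>1 \<le> t \<and> t \<le> \<tau>2 \<longrightarrow> \<bar>pds ds f x t\<bar> \<le> B"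
    and t1: "0 < \<tau>1"
  shows "bdd (ZS \<tau>1 \<tau>2) (\<lambda>z. Psi (1 / (real (CARD('n) + zN z) - 2)) f (zx z) (zs z))"
    and "bdd (ZS \<tau>1 \<tau>2) (\<lambda>z. Psij (1 / (real (CARD('n) + zN z) - 2)) f (zx z) (zs z) (zj z))"
    and "bdd (ZS \<tau>1 \<tau>2) (\<lambda>z. exp (f (zx z) (zs z) / (real (CARD('n) + zN z) - 2))
            * (1 + 2 * zs z * pds [None] f (zx z) (zs z) / (real (CARD('n) + zN z) - 2)))"
    and "bdd (ZS \<tau>1 \<tau>2) (\<lambda>z. Psis (1 / (real (CARD('n) + zN z) - 2)) f (zx z) (zs z) * sqrt (2 * zs z))"
    and "bdd (ZS \<tau>1 \<tau>2) (\<lambda>z. sqrt (2 * zs z) * exp (f (zx z) (zs z) / (real (CARD('n) + zN z) - 2))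
            * pds [Some (zj z)] f (zx z) (zs z) * (real (zN z) / (real (CARD('n) + zN z) - 2)))"
  unfolding Psi_def Psij_def Psis_def PP_def
  by (intro atom_invc atom_Nc atom_s atom_sqrt[OF t1] atom_f[OF fb] atom_j[OF fb] atom_fixed[OF fb] bdd_rules)+


lemma gradx_bound:
  fixes G :: "real^'n \<Rightarrow> (nat \<Rightarrow> real) \<Rightarrow> real"
  assumes "\<And>j. \<bar>pdx j G x y\<bar> \<le> K"
  shows "gradx_norm G x y \<le> sqrt (real CARD('n)) * K"
proof -
  have K: "0 \<le> K" using assms[of undefined] by linarith
  have "(\<Sum>j\<in>UNIV. (pdx j G x y)\<^sup>2) \<le> (\<Sum>j\<in>(UNIV::'n set). K^2)"
  proof (rule sum_mono)
    fix j :: 'n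
    have "\<bar>pdx j G x y\<bar>^2 \<le> K^2" by (rule power_mono[OF assms]) simp
    then show "(pdx j G x y)\<^sup>2 \<le> K^2" by simp
  qed
  then have "gradx_norm G x y \<le> sqrt (real CARD('n) * K^2)"
    unfolding gradx_norm_def by simp
  also have "\<dots> = sqrt (real CARD('n)) * K" using K by (simp add: real_sqrt_mult)
  finally show ?thesis .
qed

lemma div_bound:
  fixes X C r :: real
  assumes "0 < r" "\<bar>X\<bar> \<le> C"
  shows "\<bar>X / r\<bar> \<le> \<bar>C\<bar> / r"
proof -
  have "\<bar>X / r\<bar> = \<bar>X\<bar> / r" using assms(1) by (simp add: abs_divide)
  also have "\<dots> \<le> \<bar>C\<bar> / r" using assms by (intro divide_right_mono) auto
  finally show ?thesis .
qed

theorem lemma2p5: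
  fixes u f :: "real^'n \<Rightarrow> real \<Rightarrow> real" and \<tau>1 \<tau>2 :: real
  assumes tau: "0 < \<tau>1" "\<tau>1 < \<tau>2"
    and u_f: "\<forall>x t. 0 < t \<longrightarrow> u x t = t powr (- real CARD('n) / 2) * exp (- f x t)"
    and f_smooth: "\<forall>ds d x t. 0 < t \<longrightarrow>
          dline d (pds ds f) x t differentiable (at (dbase d x t))"
    and heat: "\<forall>x t. 0 < t \<longrightarrow>
          ((\<lambda>s. u x s) has_real_derivative (\<Sum>j\<in>UNIV. pd (Some j) (pd (Some j) u) x t)) (at t)"
    and f_bounded: "\<forall>ds. \<exists>B. \<forall>x t. \<tau>1 \<le> t \<and> t \<le> \<tau>2 \<longrightarrow> \<bar>pds ds f x t\<bar> \<le> B"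
  shows "\<exists>C. \<forall>N::nat. 3 \<le> N \<longrightarrow>
          (\<forall>x y. \<tau>1 \<le> sqnorm N y / (2 * real N) \<and> sqnorm N y / (2 * real N) \<le> \<tau>2 \<longrightarrow>
              \<bar>psifun N f x y\<bar> \<le> C
            \<and> gradx_norm (psifun N f) x y \<le> C
            \<and> grady_norm N (bfun N f) x y \<le> C
            \<and> grady_norm N (psifun N f) x y \<le> C / sqrt (real N)
            \<and> gradx_norm (bfun N f) x y \<le> C / sqrt (real N))"
proof -
  note B = bounds[OF f_bounded tau(1), unfolded bdd_def]
  obtain C1 where C1: "\<forall>z\<in>ZS \<tau>1 \<tau>2. \<bar>Psi (1 / (real (CARD('n) + zN z) - 2)) f (zx z) (zs z)\<bar> \<le> C1"
    using B(1) by blast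
  obtain C2 where C2: "\<forall>z\<in>ZS \<tau>1 \<tau>2. \<bar>Psij (1 / (real (CARD('n) + zN z) - 2)) f (zx z) (zs z) (zj z)\<bar> \<le> C2"
    using B(2) by blast
  obtain C3 where C3: "\<forall>z\<in>ZS \<tau>1 \<tau>2. \<bar>exp (f (zx z) (zs z) / (real (CARD('n) + zN z) - 2))
            * (1 + 2 * zs z * pds [None] f (zx z) (zs z) / (real (CARD('n) + zN z) - 2))\<bar> \<le> C3"
    using B(3) by blast
  obtain C4 where C4: "\<forall>z\<in>ZS \<tau>1 \<tau>2. \<bar>Psis (1 / (real (CARD('n) + zN z) - 2)) f (zx z) (zs z) * sqrt (2 * zs z)\<bar> \<le> C4"
    using B(4) by blast
  obtain C5 where C5: "\<forall>z\<in>ZS \<tau>1 \<tau>2. \<bar>sqrt (2 * zs z) * exp (f (zx z) (zs z) / (real (CARD('n) + zN z) - 2))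
            * pds [Some (zj z)] f (zx z) (zs z) * (real (zN z) / (real (CARD('n) + zN z) - 2))\<bar> \<le> C5"
    using B(5) by blast
  define C where "C = \<bar>C1\<bar> + sqrt (real CARD('n)) * \<bar>C2\<bar> + \<bar>C3\<bar> + \<bar>C4\<bar> + sqrt (real CARD('n)) * \<bar>C5\<bar>"
  have Cge: "\<bar>C1\<bar> \<le> C" "sqrt (real CARD('n)) * \<bar>C2\<bar> \<le> C" "\<bar>C3\<bar> \<le> C" "\<bar>C4\<bar> \<le> C"
     "sqrt (real CARD('n)) * \<bar>C5\<bar> \<le> C"
    unfolding C_def by auto
  show ?thesis
  proof (rule exI[of _ C], intro allI impI)
    fix N :: nat and x :: "real^'n" and y :: "nat \<Rightarrow> real"
    assume N3: "3 \<le> N"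
      and rng: "\<tau>1 \<le> sqnorm N y / (2 * real N) \<and> sqnorm N y / (2 * real N) \<le> \<tau>2"
    define s where "s = sqnorm N y / (2 * real N)"
    define c where "c = real (CARD('n) + N) - 2"
    have N: "0 < N" using N3 by simp
    have s: "0 < s" "\<tau>1 \<le> s" "s \<le> \<tau>2" using rng tau unfolding s_def by auto
    have Qs: "sqnorm N y = 2 * real N * s" using N unfolding s_def by simp
    have Q: "0 < sqnorm N y" using Qs s N by simp
    have sqQ: "sqrt (sqnorm N y) = sqrt (2 * s) * sqrt (real N)"
      unfolding Qs by (simp add: real_sqrt_mult ac_simps)
    have sN: "0 < sqrt (real N)" using N by simp
    have zin: "(N, x, s, j) \<in> ZS \<tau>1 \<tau>2" for j :: 'n
      using N3 s unfolding ZS_def zN_def zs_def by simp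
    note zdefs = zN_def zx_def zs_def zj_def
    have b1: "\<bar>psifun N f x y\<bar> \<le> C"
      using C1[rule_format, OF zin[of undefined]] Cge(1)
      by (simp add: psi_eq[OF f_smooth u_f heat Q N3] zdefs s_def)
    have b2: "gradx_norm (psifun N f) x y \<le> C"
    proof -
      have "gradx_norm (psifun N f) x y \<le> sqrt (real CARD('n)) * \<bar>C2\<bar>"
      proof (rule gradx_bound)
        fix j
        show "\<bar>pdx j (psifun N f) x y\<bar> \<le> \<bar>C2\<bar>"
          using C2[rule_format, OF zin[of j]]
          by (simp add: pdx_psi[OF f_smooth u_f heat Q N3] zdefs s_def)
      qed
      then show ?thesis using Cge(2) by linarith
    qed
    have b3: "grady_norm N (bfun N f) x y \<le> C"
      using C3[rule_format, OF zin[of undefined]] Cge(3)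
      by (simp add: grady_b[OF f_smooth Q N3] zdefs s_def)
    have b4: "grady_norm N (psifun N f) x y \<le> C / sqrt (real N)"
    proof -
      let ?P = "Psis (1 / (real (CARD('n) + N) - 2)) f x s"
      have "grady_norm N (psifun N f) x y = \<bar>?P / real N\<bar> * sqrt (sqnorm N y)"
        using grady_psi[OF f_smooth u_f heat Q N3] by (simp add: s_def)
      also have "\<dots> = \<bar>?P * sqrt (2 * s)\<bar> / sqrt (real N)"
      proof -
        have "sqrt (real N) * sqrt (real N) = real N" using N by simp
        then show ?thesis unfolding sqQ using N sN s
          by (simp add: abs_mult field_simps)
      qed
      also have "\<dots> \<le> C / sqrt (real N)"
        using C4[rule_format, OF zin[of undefined]] Cge(4) sN
        by (intro divide_right_mono) (simp_all add: zdefs)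
      finally show ?thesis .
    qed
    have b5: "gradx_norm (bfun N f) x y \<le> C / sqrt (real N)"
    proof -
      have "gradx_norm (bfun N f) x y \<le> sqrt (real CARD('n)) * (\<bar>C5\<bar> / sqrt (real N))"
      proof (rule gradx_bound)
        fix j
        have "pdx j (bfun N f) x y = (sqrt (2 * s) * exp (f x s / c) * pds [Some j] f x s * (real N / c)) / sqrt (real N)"
        proof -
          have c0: "c \<noteq> 0" using N3 unfolding c_def by simp
          have "pdx j (bfun N f) x y = sqrt (2 * s) * sqrt (real N) * exp (f x s / c) * (pds [Some j] f x s / c)"
            unfolding pdx_b[OF f_smooth Q N3] sqQ s_def[symmetric] c_def[symmetric] ..
          also have "\<dots> = (sqrt (2 * s) * exp (f x s / c) * pds [Some j] f x s * (sqrt (real N) * sqrt (real N) / c)) / sqrt (real N)"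
            using sN c0 by (simp add: field_simps)
          also have "sqrt (real N) * sqrt (real N) = real N" using N by simp
          finally show ?thesis .
        qed
        also have "\<bar>\<dots>\<bar> \<le> \<bar>C5\<bar> / sqrt (real N)"
        proof (rule div_bound[OF sN])
          show "\<bar>sqrt (2 * s) * exp (f x s / c) * pds [Some j] f x s * (real N / c)\<bar> \<le> C5"
            using C5[rule_format, OF zin[of j]] by (simp add: zdefs c_def)
        qed
        finally show "\<bar>pdx j (bfun N f) x y\<bar> \<le> \<bar>C5\<bar> / sqrt (real N)" .
      qed
      also have "\<dots> = (sqrt (real CARD('n)) * \<bar>C5\<bar>) / sqrt (real N)" by simp
      also have "\<dots> \<le> C / sqrt (real N)"
        using Cge(5) sN by (intro divide_right_mono) simp_all
      finally show ?thesis .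
    qed
    show "\<bar>psifun N f x y\<bar> \<le> C
            \<and> gradx_norm (psifun N f) x y \<le> C
            \<and> grady_norm N (bfun N f) x y \<le> C
            \<and> grady_norm N (psifun N f) x y \<le> C / sqrt (real N)
            \<and> gradx_norm (bfun N f) x y \<le> C / sqrt (real N)"
      using b1 b2 b3 b4 b5 by blast
  qed
qed

end
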